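(* No deterministic max-finding algorithm has error less than $2$: for every deterministic algorithm that, using comparisons, outputs one of its input elements, there exist an input and comparator answers consistent with the model for which the output element $x$ satisfies $x \le x^* - 2$, where $x^*$ is the maximum value of an input element.
   Context: Model of imprecise comparisons: there are $n$ elements, each with a fixed unknown real value; we identify an element with its value. An algorithm accesses the elements only through a comparator: asked to compare $x_i$ and $x_j$, it answers either "$x_i \ge x_j$" or "$x_j \ge x_i$". If $|x_i-x_j|>1$ the answer is correct; if $|x_i-x_j|\le 1$ the answer is arbitrary (possibly adversarial and adaptive). The error of a max-finding algorithm is the smallest $k$ such that, for every input and every comparator behaviour consistent with this rule, the output $x$ satisfies $x \ge x^*-k$, where $x^*$ is the maximum value among the input elements. *)

theory Defs
  imports Main "HOL.Real"
begin

text \<open>A deterministic comparison-based algorithm on elements indexed 0..n-1 is a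
finite decision tree. Node i j L R: ask the comparator about x_i and x_j;
continue with L if the answer is "x_i >= x_j", with R if the answer is "x_j >= x_i".\<close>

datatype alg = Leaf nat | Cmp nat nat alg alg

fun wf_alg :: "nat \<Rightarrow> alg \<Rightarrow> bool" where
  "wf_alg n (Leaf k) = (k < n)"
| "wf_alg n (Cmp i j l r) = (i < n \<and> j < n \<and> wf_alg n l \<and> wf_alg n r)"

text \<open>run x A k: for input values x, some comparator behaviour consistent with the
imprecise-comparison model (answers correct whenever the values differ by more than 1,
otherwise arbitrary, adaptively) makes algorithm A output element k.\<close>
inductive run :: "(nat \<Rightarrow> real) \<Rightarrow> alg \<Rightarrow> nat \<Rightarrow> bool" where
  leaf: "run x (Leaf k) k"
| left: "\<not> (x j - x i > 1) \<Longrightarrow> run x l k \<Longrightarrow> run x (Cmp i j l r) k"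
| right: "\<not> (x i - x j > 1) \<Longrightarrow> run x r k \<Longrightarrow> run x (Cmp i j l r) k"

end

theory Submission
  imports Defs
begin

fun outp :: "(nat \<Rightarrow> nat \<Rightarrow> bool) \<Rightarrow> alg \<Rightarrow> nat" where
  "outp T (Leaf k) = k"
| "outp T (Cmp i j l r) = (if T i j then outp T l else outp T r)"

lemma outp_run:
  assumes "\<And>i j. T i j \<Longrightarrow> \<not> (x j - x i > 1)"
      and "\<And>i j. \<not> T i j \<Longrightarrow> \<not> (x i - x j > 1)"
  shows "run x A (outp T A)"
proof (induction A)
  case (Leaf k) then show ?case by (simp add: run.leaf)
next
  case (Cmp i j l r)
  show ?case
  proof (cases "T i j")
    case True then show ?thesis using Cmp assms(1)[OF True] by (simp add: run.left)
  next
    case False then show ?thesis using Cmp assms(2)[OF False] by (simp add: run.right)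
  qed
qed

lemma outp_wf: "wf_alg n A \<Longrightarrow> outp T A < n"
  by (induction A) auto

theorem mainTheorem2:
  fixes n :: nat and A :: alg
  assumes "n \<ge> 3" and "wf_alg n A"
  shows "\<exists>(x :: nat \<Rightarrow> real) k. run x A k \<and> x k \<le> Max (x ` {..<n}) - 2"
proof -
  define T where "T = (\<lambda>i j::nat. (i > j \<and> \<not> (i = n-1 \<and> j = 0)) \<or> (i = 0 \<and> j = n-1))"
  define k where "k = outp T A"
  have kn: "k < n" using outp_wf[OF assms(2)] k_def by simp
  define m where "m = (if k = 0 then 1 else if k = n-1 then 0 else k+1)"
  have mn: "m < n" "m \<noteq> k" using kn assms(1) by (auto simp: m_def)
  have Tmk: "T m k" using kn assms(1) by (auto simp: m_def T_def)
  have nTkm: "\<not> T k m" using kn assms(1) by (auto simp: m_def T_def)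
  define x where "x = (\<lambda>t. if t = k then 0 else if t = m then 2 else (1::real))"
  have gt: "x j - x i > 1 \<Longrightarrow> j = m \<and> i = k" for i j
    unfolding x_def using mn by (auto split: if_splits)
  have r: "run x A k" unfolding k_def
    apply (rule outp_run)
    using gt Tmk nTkm by blast+
  have "x m \<le> Max (x ` {..<n})" using mn by (intro Max_ge) auto
  moreover have "x m = 2" "x k = 0" using mn by (auto simp: x_def)
  ultimately show ?thesis using r by (intro exI[of _ x] exI[of _ k]) auto
qed

end
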